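(* Let $\mu$ be a probability distribution on $(E,\mathscr{E})$ and $Q$ an isometric involution of $L^{2}(\mu)$ given by a Markov kernel. If the Markov operator $P$ is $(\mu,Q)$-self-adjoint then $QP$ and $PQ$ are $\mu$-self-adjoint; if $P$ is $\mu$-self-adjoint then $QP$ and $PQ$ are $(\mu,Q)$-self-adjoint. As a result a $(\mu,Q)$-self-adjoint Markov operator is always the composition of two $\mu$-self-adjoint Markov operators.
   Context: $\langle f,g\rangle_{\mu}=\int fg\,{\rm d}\mu$ on $L^{2}(\mu)$. An isometric involution is a linear operator $Q$ on $L^{2}(\mu)$ with $\langle Qf,Qg\rangle_{\mu}=\langle f,g\rangle_{\mu}$ for all $f,g$ and $Q^{2}={\rm Id}$; here $Q$ is the operator of a Markov kernel. A Markov operator $P$ on $L^{2}(\mu)$ is $\mu$-self-adjoint if $\langle Pf,g\rangle_{\mu}=\langle f,Pg\rangle_{\mu}$ for all $f,g$, and $(\mu,Q)$-self-adjoint if $\langle Pf,g\rangle_{\mu}=\langle f,QPQg\rangle_{\mu}$ for all $f,g\in L^{2}(\mu)$. *)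

theory Defs
  imports "HOL-Probability.Probability"
begin

definition markov_kernel :: "'a measure \<Rightarrow> ('a \<Rightarrow> 'a measure) \<Rightarrow> bool" where
  "markov_kernel M K \<longleftrightarrow> K \<in> M \<rightarrow>\<^sub>M prob_algebra M"

definition kop :: "('a \<Rightarrow> 'a measure) \<Rightarrow> ('a \<Rightarrow> real) \<Rightarrow> 'a \<Rightarrow> real" where
  "kop K f x = (\<integral>y. f y \<partial>(K x))"

definition L2 :: "'a measure \<Rightarrow> ('a \<Rightarrow> real) set" where
  "L2 M = {f. f \<in> borel_measurable M \<and> integrable M (\<lambda>x. (f x)^2)}"

definition inner_mu :: "'a measure \<Rightarrow> ('a \<Rightarrow> real) \<Rightarrow> ('a \<Rightarrow> real) \<Rightarrow> real" where
  "inner_mu M f g = (\<integral>x. f x * g x \<partial>M)"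

text \<open>A Markov kernel whose operator is a (well-defined) operator on L2(mu):
  it maps L2 into L2 and respects mu-a.e. equality.\<close>
definition markov_op_L2 :: "'a measure \<Rightarrow> ('a \<Rightarrow> 'a measure) \<Rightarrow> bool" where
  "markov_op_L2 M K \<longleftrightarrow> markov_kernel M K
     \<and> (\<forall>f\<in>L2 M. kop K f \<in> L2 M)
     \<and> (\<forall>f\<in>L2 M. \<forall>g\<in>L2 M. (AE x in M. f x = g x) \<longrightarrow> (AE x in M. kop K f x = kop K g x))"

definition isometric_involution :: "'a measure \<Rightarrow> ('a \<Rightarrow> 'a measure) \<Rightarrow> bool" where
  "isometric_involution M Q \<longleftrightarrow> markov_op_L2 M Q
     \<and> (\<forall>f\<in>L2 M. \<forall>g\<in>L2 M. inner_mu M (kop Q f) (kop Q g) = inner_mu M f g)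
     \<and> (\<forall>f\<in>L2 M. AE x in M. kop Q (kop Q f) x = f x)"

definition mu_self_adjoint :: "'a measure \<Rightarrow> (('a \<Rightarrow> real) \<Rightarrow> ('a \<Rightarrow> real)) \<Rightarrow> bool" where
  "mu_self_adjoint M T \<longleftrightarrow>
     (\<forall>f\<in>L2 M. \<forall>g\<in>L2 M. inner_mu M (T f) g = inner_mu M f (T g))"

definition muQ_self_adjoint :: "'a measure \<Rightarrow> ('a \<Rightarrow> 'a measure) \<Rightarrow> (('a \<Rightarrow> real) \<Rightarrow> ('a \<Rightarrow> real)) \<Rightarrow> bool" where
  "muQ_self_adjoint M Q T \<longleftrightarrow>
     (\<forall>f\<in>L2 M. \<forall>g\<in>L2 M. inner_mu M (T f) g = inner_mu M f (kop Q (T (kop Q g))))"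

end

theory Submission
  imports Defs
begin

lemma bind_nonneg:
  assumes K: "K \<in> space (prob_algebra M)" and P: "P \<in> M \<rightarrow>\<^sub>M prob_algebra M"
  and g[measurable]: "g \<in> borel_measurable M" and nn: "\<And>z. 0 \<le> g z"
  and fin: "(\<integral>\<^sup>+ y. \<integral>\<^sup>+ z. ennreal (g z) \<partial>P y \<partial>K) < \<infinity>"
  shows "integrable (K \<bind> P) g" "integrable K (\<lambda>y. integral\<^sup>L (P y) g)"
    "AE y in K. integrable (P y) g"
    "integral\<^sup>L (K \<bind> P) g = (\<integral> y. integral\<^sup>L (P y) g \<partial>K)"
proof -
  have Ks: "sets K = sets M" "prob_space K" using K by (auto simp: space_prob_algebra)
  have Ps: "\<And>y. y \<in> space M \<Longrightarrow> sets (P y) = sets M \<and> prob_space (P y)"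
    using measurable_space[OF P] by (auto simp: space_prob_algebra)
  have PsubM: "P \<in> M \<rightarrow>\<^sub>M subprob_algebra M" using measurable_prob_algebraD[OF P] .
  have Psub: "P \<in> K \<rightarrow>\<^sub>M subprob_algebra M"
    using PsubM measurable_cong_sets[OF Ks(1) refl, of "subprob_algebra M"] by simp
  have bindsets: "sets (K \<bind> P) = sets M" by (rule sets_bind'[OF K P])
  have gK: "g \<in> borel_measurable (K \<bind> P)" by (subst measurable_cong_sets[OF bindsets refl]) (rule g)
  have nnb: "(\<integral>\<^sup>+ z. ennreal (g z) \<partial>(K \<bind> P)) = (\<integral>\<^sup>+ y. \<integral>\<^sup>+ z. ennreal (g z) \<partial>P y \<partial>K)"
    by (rule nn_integral_bind[OF _ Psub]) simp
  show "integrable (K \<bind> P) g"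
    by (rule integrableI_nonneg) (use gK nn nnb fin in auto)
  have mI: "(\<lambda>y. integral\<^sup>L (P y) g) \<in> borel_measurable K"
    by (rule measurable_compose[OF Psub integral_measurable_subprob_algebra[OF g]])
  have mN: "(\<lambda>y. \<integral>\<^sup>+ z. ennreal (g z) \<partial>P y) \<in> borel_measurable K"
    by (rule measurable_compose[OF Psub nn_integral_measurable_subprob_algebra]) simp
  have ae_fin: "AE y in K. (\<integral>\<^sup>+ z. ennreal (g z) \<partial>P y) \<noteq> \<infinity>"
    using nn_integral_PInf_AE[OF mN] fin by auto
  have ae: "AE y in K. integrable (P y) g \<and> ennreal (integral\<^sup>L (P y) g) = (\<integral>\<^sup>+ z. ennreal (g z) \<partial>P y)"
    using ae_fin
  proof (rule AE_mp, intro AE_I2 impI)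
    fix y assume y: "y \<in> space K" and f: "(\<integral>\<^sup>+ z. ennreal (g z) \<partial>P y) \<noteq> \<infinity>"
    have "y \<in> space M" using y sets_eq_imp_space_eq[OF Ks(1)] by simp
    then have sy: "sets (P y) = sets M" using Ps by auto
    have gy: "g \<in> borel_measurable (P y)" by (subst measurable_cong_sets[OF sy refl]) (rule g)
    have i: "integrable (P y) g" by (rule integrableI_nonneg) (use gy nn f top.not_eq_extremum in auto)
    show "integrable (P y) g \<and> ennreal (integral\<^sup>L (P y) g) = (\<integral>\<^sup>+ z. ennreal (g z) \<partial>P y)"
      using i nn_integral_eq_integral[OF i] nn by auto
  qed
  then show "AE y in K. integrable (P y) g" by auto
  have nnK: "(\<integral>\<^sup>+ y. ennreal (integral\<^sup>L (P y) g) \<partial>K) = (\<integral>\<^sup>+ y. \<integral>\<^sup>+ z. ennreal (g z) \<partial>P y \<partial>K)"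
    by (rule nn_integral_cong_AE) (use ae in auto)
  show "integrable K (\<lambda>y. integral\<^sup>L (P y) g)"
    by (rule integrableI_nonneg) (use mI nnK fin nn in \<open>auto intro!: integral_nonneg\<close>)
  have "integral\<^sup>L (K \<bind> P) g = enn2real (\<integral>\<^sup>+ z. ennreal (g z) \<partial>(K \<bind> P))"
    by (rule integral_eq_nn_integral) (use gK nn in auto)
  also have "\<dots> = enn2real (\<integral>\<^sup>+ y. ennreal (integral\<^sup>L (P y) g) \<partial>K)" using nnb nnK by simp
  also have "\<dots> = (\<integral> y. integral\<^sup>L (P y) g \<partial>K)"
    by (rule integral_eq_nn_integral[symmetric]) (use mI nn in \<open>auto intro!: integral_nonneg\<close>)
  finally show "integral\<^sup>L (K \<bind> P) g = (\<integral> y. integral\<^sup>L (P y) g \<partial>K)" .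
qed


lemma bind_int:
  assumes K: "K \<in> space (prob_algebra M)" and P: "P \<in> M \<rightarrow>\<^sub>M prob_algebra M"
  and f[measurable]: "f \<in> borel_measurable M"
  and fin: "(\<integral>\<^sup>+ y. \<integral>\<^sup>+ z. ennreal \<bar>f z\<bar> \<partial>P y \<partial>K) < \<infinity>"
  shows "integral\<^sup>L (K \<bind> P) f = (\<integral> y. integral\<^sup>L (P y) f \<partial>K)"
proof -
  define fp where "fp = (\<lambda>z. max (f z) 0)"
  define fm where "fm = (\<lambda>z. max (- f z) 0)"
  have mp: "fp \<in> borel_measurable M" "fm \<in> borel_measurable M" unfolding fp_def fm_def by measurable
  have finp: "(\<integral>\<^sup>+ y. \<integral>\<^sup>+ z. ennreal (fp z) \<partial>P y \<partial>K) < \<infinity>"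
    by (rule le_less_trans[OF _ fin]) (intro nn_integral_mono, simp add: fp_def ennreal_leI)
  have finm: "(\<integral>\<^sup>+ y. \<integral>\<^sup>+ z. ennreal (fm z) \<partial>P y \<partial>K) < \<infinity>"
    by (rule le_less_trans[OF _ fin]) (intro nn_integral_mono, simp add: fm_def ennreal_leI)
  have nnp: "\<And>z. 0 \<le> fp z" and nnm: "\<And>z. 0 \<le> fm z" by (auto simp: fp_def fm_def)
  note Bp = bind_nonneg[OF K P mp(1) nnp finp] and Bm = bind_nonneg[OF K P mp(2) nnm finm]
  have feq: "f = (\<lambda>z. fp z - fm z)" by (auto simp: fp_def fm_def)
  have Ks: "sets K = sets M" using K by (auto simp: space_prob_algebra)
  have Psub: "P \<in> K \<rightarrow>\<^sub>M subprob_algebra M"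
    using measurable_prob_algebraD[OF P] measurable_cong_sets[OF Ks refl, of "subprob_algebra M"] by simp
  have mI: "(\<lambda>y. integral\<^sup>L (P y) f) \<in> borel_measurable K"
    by (rule measurable_compose[OF Psub integral_measurable_subprob_algebra[OF f]])
  have "integral\<^sup>L (K \<bind> P) f = integral\<^sup>L (K \<bind> P) (\<lambda>z. fp z - fm z)" using feq by simp
  also have "\<dots> = integral\<^sup>L (K \<bind> P) fp - integral\<^sup>L (K \<bind> P) fm"
    by (rule Bochner_Integration.integral_diff[OF Bp(1) Bm(1)])
  also have "\<dots> = (\<integral> y. integral\<^sup>L (P y) fp \<partial>K) - (\<integral> y. integral\<^sup>L (P y) fm \<partial>K)"
    using Bp(4) Bm(4) by simp
  also have "\<dots> = (\<integral> y. integral\<^sup>L (P y) fp - integral\<^sup>L (P y) fm \<partial>K)"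
    by (rule Bochner_Integration.integral_diff[OF Bp(2) Bm(2), symmetric])
  also have "\<dots> = (\<integral> y. integral\<^sup>L (P y) f \<partial>K)"
  proof (rule integral_cong_AE)
    show "(\<lambda>y. integral\<^sup>L (P y) fp - integral\<^sup>L (P y) fm) \<in> borel_measurable K"
      using Bp(2) Bm(2) unfolding fp_def fm_def by measurable
    show "(\<lambda>y. integral\<^sup>L (P y) f) \<in> borel_measurable K" by (rule mI)
    show "AE y in K. integral\<^sup>L (P y) fp - integral\<^sup>L (P y) fm = integral\<^sup>L (P y) f"
      using Bp(3) Bm(3) unfolding fp_def fm_def
      by eventually_elim (subst (3) feq, simp add: fp_def fm_def)
  qed
  finally show ?thesis .
qed

lemma invariant_nn:
  assumes M: "prob_space M" and K: "K \<in> M \<rightarrow>\<^sub>M prob_algebra M"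
  and inv: "\<And>A. A \<in> sets M \<Longrightarrow> (\<integral> x. measure (K x) A \<partial>M) = measure M A"
  and h: "h \<in> borel_measurable M"
  shows "(\<integral>\<^sup>+ x. \<integral>\<^sup>+ y. h y \<partial>K x \<partial>M) = integral\<^sup>N M h"
proof -
  have Ksub: "K \<in> M \<rightarrow>\<^sub>M subprob_algebra M" using measurable_prob_algebraD[OF K] .
  have Kx: "\<And>x. x \<in> space M \<Longrightarrow> sets (K x) = sets M \<and> prob_space (K x)"
    using measurable_space[OF K] by (auto simp: space_prob_algebra)
  have ne: "space M \<noteq> {}" using prob_space.not_empty[OF M] .
  have eq: "M \<bind> K = M"
  proof (rule measure_eqI)
    show ss: "sets (M \<bind> K) = sets M" by (rule sets_bind) (use Kx ne in auto)
    fix A assume "A \<in> sets (M \<bind> K)"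
    then have A: "A \<in> sets M" using ss by simp
    have mm: "(\<lambda>x. measure (K x) A) \<in> borel_measurable M"
      by (rule measurable_compose[OF K measurable_measure_prob_algebra[OF A]])
    have int: "integrable M (\<lambda>x. measure (K x) A)"
    proof -
      have le: "\<And>x. x \<in> space M \<Longrightarrow> norm (measure (K x) A) \<le> 1"
        using Kx prob_space.prob_le_1 by auto
      show ?thesis
        using M mm le by (intro finite_measure.integrable_const_bound[where B=1])
          (auto simp: prob_space_def intro!: AE_I2)
    qed
    have "emeasure (M \<bind> K) A = (\<integral>\<^sup>+ x. emeasure (K x) A \<partial>M)"
      by (rule emeasure_bind[OF ne Ksub A])
    also have "\<dots> = (\<integral>\<^sup>+ x. ennreal (measure (K x) A) \<partial>M)"
      proof (rule nn_integral_cong)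
      fix x assume "x \<in> space M"
      then have "prob_space (K x)" using Kx by auto
      then show "emeasure (K x) A = ennreal (measure (K x) A)"
        by (simp add: prob_space_def finite_measure.emeasure_eq_measure)
    qed
    also have "\<dots> = ennreal (\<integral> x. measure (K x) A \<partial>M)"
      by (rule nn_integral_eq_integral[OF int]) simp
    also have "\<dots> = emeasure M A" using inv[OF A] M A by (simp add: prob_space_def finite_measure.emeasure_eq_measure)
    finally show "emeasure (M \<bind> K) A = emeasure M A" .
  qed
  have "(\<integral>\<^sup>+ x. \<integral>\<^sup>+ y. h y \<partial>K x \<partial>M) = integral\<^sup>N (M \<bind> K) h"
    by (rule nn_integral_bind[OF h Ksub, symmetric])
  then show ?thesis using eq by simp
qed

lemma abs_le_1_sq: "\<bar>t::real\<bar> \<le> 1 + t^2"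
proof -
  have "0 \<le> (\<bar>t\<bar> - 1)^2" by simp
  then have "0 \<le> t^2 - 2 * \<bar>t\<bar> + 1" by (simp add: power2_diff)
  then show ?thesis by (smt (verit) zero_le_power2)
qed

lemma key:
  assumes M: "prob_space M" and Q: "Q \<in> M \<rightarrow>\<^sub>M prob_algebra M" and P: "P \<in> M \<rightarrow>\<^sub>M prob_algebra M"
  and invQ: "\<And>h. h \<in> borel_measurable M \<Longrightarrow> (\<integral>\<^sup>+ x. \<integral>\<^sup>+ y. h y \<partial>Q x \<partial>M) = integral\<^sup>N M h"
  and invP: "\<And>h. h \<in> borel_measurable M \<Longrightarrow> (\<integral>\<^sup>+ x. \<integral>\<^sup>+ y. h y \<partial>P x \<partial>M) = integral\<^sup>N M h"
  and f[measurable]: "f \<in> borel_measurable M" and fi: "integrable M f"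
  shows "AE x in M. kop (\<lambda>x. Q x \<bind> P) f x = kop Q (kop P f) x"
proof -
  define H where "H = (\<lambda>y. \<integral>\<^sup>+ z. ennreal \<bar>f z\<bar> \<partial>P y)"
  have Hm: "H \<in> borel_measurable M" unfolding H_def
    by (rule measurable_compose[OF measurable_prob_algebraD[OF P] nn_integral_measurable_subprob_algebra]) simp
  define G where "G = (\<lambda>x. \<integral>\<^sup>+ y. H y \<partial>Q x)"
  have Gm: "G \<in> borel_measurable M" unfolding G_def
    by (rule measurable_compose[OF measurable_prob_algebraD[OF Q] nn_integral_measurable_subprob_algebra]) (rule Hm)
  have "integral\<^sup>N M G = integral\<^sup>N M H" unfolding G_def by (rule invQ[OF Hm])
  also have "\<dots> = (\<integral>\<^sup>+ z. ennreal \<bar>f z\<bar> \<partial>M)" unfolding H_def by (rule invP) simp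
  also have "\<dots> < \<infinity>" using fi unfolding integrable_iff_bounded by (simp only: real_norm_def)
  finally have "AE x in M. G x \<noteq> \<infinity>" using nn_integral_PInf_AE[OF Gm] by auto
  then show ?thesis
  proof (rule AE_mp, intro AE_I2 impI)
    fix x assume x: "x \<in> space M" and g: "G x \<noteq> \<infinity>"
    have Qx: "Q x \<in> space (prob_algebra M)" using measurable_space[OF Q x] .
    show "kop (\<lambda>x. Q x \<bind> P) f x = kop Q (kop P f) x"
      unfolding kop_def
      by (rule bind_int[OF Qx P f]) (use g in \<open>simp add: G_def H_def top.not_eq_extremum\<close>)
  qed
qed


lemma kop_one:
  assumes K: "K \<in> M \<rightarrow>\<^sub>M prob_algebra M" and x: "x \<in> space M"
  shows "kop K (\<lambda>_. 1) x = 1"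
proof -
  have "prob_space (K x)" using measurable_space[OF K x] by (auto simp: space_prob_algebra)
  then show ?thesis by (simp add: kop_def prob_space.prob_space)
qed

lemma kop_cong:
  assumes K: "K \<in> M \<rightarrow>\<^sub>M prob_algebra M" and x: "x \<in> space M"
  and fg: "\<And>y. y \<in> space M \<Longrightarrow> f y = g y"
  shows "kop K f x = kop K g x"
proof -
  have "sets (K x) = sets M" using measurable_space[OF K x] by (auto simp: space_prob_algebra)
  then have "space (K x) = space M" by (rule sets_eq_imp_space_eq)
  then show ?thesis unfolding kop_def by (intro Bochner_Integration.integral_cong) (auto simp: fg)
qed

lemma kop_ind:
  assumes K: "K \<in> M \<rightarrow>\<^sub>M prob_algebra M" and x: "x \<in> space M" and A: "A \<in> sets M"
  shows "kop K (indicator A) x = measure (K x) A"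
proof -
  have "sets (K x) = sets M" "prob_space (K x)" using measurable_space[OF K x] by (auto simp: space_prob_algebra)
  then show ?thesis using A unfolding kop_def
    by (simp add: prob_space_def finite_measure.emeasure_finite top.not_eq_extremum)
qed

lemma ind_L2:
  assumes M: "prob_space M" and A: "A \<in> sets M"
  shows "indicator A \<in> L2 M"
proof -
  have "(\<lambda>x. (indicator A x :: real)^2) = indicator A" by (auto simp: indicator_def)
  moreover have "integrable M (indicator A :: _ \<Rightarrow> real)"
    using M A finite_measure.emeasure_finite[of M A]
    by (intro integrable_real_indicator) (simp_all add: prob_space_def less_top[symmetric])
  ultimately show ?thesis using A unfolding L2_def by simp
qed

lemma one_L2:
  assumes M: "prob_space M"
  shows "(\<lambda>_. 1::real) \<in> L2 M"
  using M unfolding L2_def by (simp add: prob_space_def finite_measure.integrable_const)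

theorem proposition2p5:
  fixes M :: "'a measure" and Q P :: "'a \<Rightarrow> 'a measure"
  assumes "prob_space M"
    and "isometric_involution M Q"
    and "markov_op_L2 M P"
  shows "(muQ_self_adjoint M Q (kop P) \<longrightarrow>
            mu_self_adjoint M (kop Q \<circ> kop P) \<and> mu_self_adjoint M (kop P \<circ> kop Q))
       \<and> (mu_self_adjoint M (kop P) \<longrightarrow>
            muQ_self_adjoint M Q (kop Q \<circ> kop P) \<and> muQ_self_adjoint M Q (kop P \<circ> kop Q))
       \<and> (muQ_self_adjoint M Q (kop P) \<longrightarrow>
            (\<exists>K1 K2. markov_op_L2 M K1 \<and> markov_op_L2 M K2
               \<and> mu_self_adjoint M (kop K1) \<and> mu_self_adjoint M (kop K2)
               \<and> (\<forall>f\<in>L2 M. AE x in M. kop P f x = kop K1 (kop K2 f) x)))"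
proof -
  have M: "prob_space M" by fact
  have Qop: "markov_op_L2 M Q"
    and iso: "\<And>f g. f \<in> L2 M \<Longrightarrow> g \<in> L2 M \<Longrightarrow> inner_mu M (kop Q f) (kop Q g) = inner_mu M f g"
    and QQ: "\<And>f. f \<in> L2 M \<Longrightarrow> AE x in M. kop Q (kop Q f) x = f x"
    using assms(2) unfolding isometric_involution_def by auto
  have Qk: "Q \<in> M \<rightarrow>\<^sub>M prob_algebra M"
    and QL2: "\<And>f. f \<in> L2 M \<Longrightarrow> kop Q f \<in> L2 M"
    and QAE: "\<And>f g. f \<in> L2 M \<Longrightarrow> g \<in> L2 M \<Longrightarrow> (AE x in M. f x = g x) \<Longrightarrow> (AE x in M. kop Q f x = kop Q g x)"
    using Qop unfolding markov_op_L2_def markov_kernel_def by auto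
  have Pk: "P \<in> M \<rightarrow>\<^sub>M prob_algebra M"
    and PL2: "\<And>f. f \<in> L2 M \<Longrightarrow> kop P f \<in> L2 M"
    and PAE: "\<And>f g. f \<in> L2 M \<Longrightarrow> g \<in> L2 M \<Longrightarrow> (AE x in M. f x = g x) \<Longrightarrow> (AE x in M. kop P f x = kop P g x)"
    using assms(3) unfolding markov_op_L2_def markov_kernel_def by auto
  have L2m: "\<And>f. f \<in> L2 M \<Longrightarrow> f \<in> borel_measurable M" unfolding L2_def by auto
  have icong: "inner_mu M f g = inner_mu M f g'"
    if "f \<in> L2 M" "g \<in> L2 M" "g' \<in> L2 M" "AE x in M. g x = g' x" for f g g'
  proof -
    have [measurable]: "f \<in> borel_measurable M" "g \<in> borel_measurable M" "g' \<in> borel_measurable M"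
      using that L2m by auto
    show ?thesis unfolding inner_mu_def
      by (rule integral_cong_AE) (simp, simp, use that(4) in eventually_elim, simp)
  qed
  have icomm: "\<And>f g. inner_mu M f g = inner_mu M g f" unfolding inner_mu_def by (simp add: mult.commute)
  have icong_sp: "inner_mu M f g = inner_mu M f g'" if "\<And>x. x \<in> space M \<Longrightarrow> g x = g' x" for f g g'
    unfolding inner_mu_def by (intro Bochner_Integration.integral_cong) (auto simp: that)
  have Qsa: "inner_mu M (kop Q f) g = inner_mu M f (kop Q g)" if "f \<in> L2 M" "g \<in> L2 M" for f g
  proof -
    have ae: "AE x in M. g x = kop Q (kop Q g) x" using QQ[OF that(2)] by eventually_elim simp
    have "inner_mu M (kop Q f) g = inner_mu M (kop Q f) (kop Q (kop Q g))"
      by (rule icong[OF QL2[OF that(1)] that(2) QL2[OF QL2[OF that(2)]] ae])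
    also have "\<dots> = inner_mu M f (kop Q g)" by (rule iso[OF that(1) QL2[OF that(2)]])
    finally show ?thesis .
  qed
  have part1: "mu_self_adjoint M (kop Q \<circ> kop P) \<and> mu_self_adjoint M (kop P \<circ> kop Q)"
    if mQ: "muQ_self_adjoint M Q (kop P)"
  proof -
    have mQ': "\<And>f g. f \<in> L2 M \<Longrightarrow> g \<in> L2 M \<Longrightarrow> inner_mu M (kop P f) g = inner_mu M f (kop Q (kop P (kop Q g)))"
      using mQ unfolding muQ_self_adjoint_def by auto
    have A: "inner_mu M (kop Q (kop P f)) g = inner_mu M f (kop Q (kop P g))" if "f \<in> L2 M" "g \<in> L2 M" for f g
    proof -
      have "inner_mu M (kop Q (kop P f)) g = inner_mu M (kop P f) (kop Q g)" by (rule Qsa[OF PL2 that(2)]) fact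
      also have "\<dots> = inner_mu M f (kop Q (kop P (kop Q (kop Q g))))" by (rule mQ'[OF that(1) QL2[OF that(2)]])
      also have "\<dots> = inner_mu M f (kop Q (kop P g))"
        by (rule icong) (use that QL2 PL2 QAE PAE QQ in auto)
      finally show ?thesis .
    qed
    have B: "inner_mu M (kop P (kop Q f)) g = inner_mu M f (kop P (kop Q g))" if "f \<in> L2 M" "g \<in> L2 M" for f g
    proof -
      have "inner_mu M (kop P (kop Q f)) g = inner_mu M (kop Q f) (kop Q (kop P (kop Q g)))" by (rule mQ'[OF QL2 that(2)]) fact
      also have "\<dots> = inner_mu M f (kop Q (kop Q (kop P (kop Q g))))" by (rule Qsa) (use that QL2 PL2 in auto)
      also have "\<dots> = inner_mu M f (kop P (kop Q g))"
        by (rule icong) (use that QL2 PL2 QQ in auto)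
      finally show ?thesis .
    qed
    show ?thesis using A B unfolding mu_self_adjoint_def by simp
  qed
  have part2: "muQ_self_adjoint M Q (kop Q \<circ> kop P) \<and> muQ_self_adjoint M Q (kop P \<circ> kop Q)"
    if sa: "mu_self_adjoint M (kop P)"
  proof -
    have sa': "\<And>f g. f \<in> L2 M \<Longrightarrow> g \<in> L2 M \<Longrightarrow> inner_mu M (kop P f) g = inner_mu M f (kop P g)"
      using sa unfolding mu_self_adjoint_def by auto
    have A: "inner_mu M (kop Q (kop P f)) g = inner_mu M f (kop Q (kop Q (kop P (kop Q g))))" if "f \<in> L2 M" "g \<in> L2 M" for f g
    proof -
      have "inner_mu M (kop Q (kop P f)) g = inner_mu M (kop P f) (kop Q g)" by (rule Qsa[OF PL2 that(2)]) fact
      also have "\<dots> = inner_mu M f (kop P (kop Q g))" by (rule sa'[OF that(1) QL2[OF that(2)]])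
      also have "\<dots> = inner_mu M f (kop Q (kop Q (kop P (kop Q g))))"
      proof (rule icong)
        show "AE x in M. kop P (kop Q g) x = kop Q (kop Q (kop P (kop Q g))) x"
          using QQ[OF PL2[OF QL2[OF that(2)]]] by eventually_elim simp
      qed (use that QL2 PL2 in auto)
      finally show ?thesis .
    qed
    have B: "inner_mu M (kop P (kop Q f)) g = inner_mu M f (kop Q (kop P (kop Q (kop Q g))))" if "f \<in> L2 M" "g \<in> L2 M" for f g
    proof -
      have "inner_mu M (kop P (kop Q f)) g = inner_mu M (kop Q f) (kop P g)" by (rule sa'[OF QL2 that(2)]) fact
      also have "\<dots> = inner_mu M f (kop Q (kop P g))" by (rule Qsa) (use that PL2 in auto)
      also have "\<dots> = inner_mu M f (kop Q (kop P (kop Q (kop Q g))))"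
      proof (rule icong)
        have a1: "AE x in M. g x = kop Q (kop Q g) x" using QQ[OF that(2)] by eventually_elim simp
        have a2: "AE x in M. kop P g x = kop P (kop Q (kop Q g)) x"
          by (rule PAE[OF that(2) QL2[OF QL2[OF that(2)]] a1])
        show "AE x in M. kop Q (kop P g) x = kop Q (kop P (kop Q (kop Q g))) x"
          by (rule QAE[OF PL2[OF that(2)] PL2[OF QL2[OF QL2[OF that(2)]]] a2])
      qed (use that QL2 PL2 in auto)
      finally show ?thesis .
    qed
    show ?thesis using A B unfolding muQ_self_adjoint_def by simp
  qed
  have part3: "\<exists>K1 K2. markov_op_L2 M K1 \<and> markov_op_L2 M K2
               \<and> mu_self_adjoint M (kop K1) \<and> mu_self_adjoint M (kop K2)
               \<and> (\<forall>f\<in>L2 M. AE x in M. kop P f x = kop K1 (kop K2 f) x)"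
    if mQ: "muQ_self_adjoint M Q (kop P)"
  proof -
    have mQ': "\<And>f g. f \<in> L2 M \<Longrightarrow> g \<in> L2 M \<Longrightarrow> inner_mu M (kop P f) g = inner_mu M f (kop Q (kop P (kop Q g)))"
      using mQ unfolding muQ_self_adjoint_def by auto
    note p1 = part1[OF mQ]
    have p1A: "\<And>f g. f \<in> L2 M \<Longrightarrow> g \<in> L2 M \<Longrightarrow> inner_mu M (kop Q (kop P f)) g = inner_mu M f (kop Q (kop P g))"
      using p1 unfolding mu_self_adjoint_def by auto
    have one: "(\<lambda>_. 1::real) \<in> L2 M" by (rule one_L2[OF M])
    have indI: "(\<integral> x. measure (K x) A \<partial>M) = inner_mu M (kop K (indicator A)) (\<lambda>_. 1)"
      if "K \<in> M \<rightarrow>\<^sub>M prob_algebra M" "A \<in> sets M" for K A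
      unfolding inner_mu_def by (intro Bochner_Integration.integral_cong) (auto simp: kop_ind[OF that(1) _ that(2)])
    have ind1: "inner_mu M (indicator A) (\<lambda>_. 1) = measure M A" if "A \<in> sets M" for A
      using M that unfolding inner_mu_def
      by (simp add: prob_space_def finite_measure.emeasure_finite top.not_eq_extremum)
    have invQm: "(\<integral> x. measure (Q x) A \<partial>M) = measure M A" if A: "A \<in> sets M" for A
    proof -
      have "(\<integral> x. measure (Q x) A \<partial>M) = inner_mu M (kop Q (indicator A)) (\<lambda>_. 1)" by (rule indI[OF Qk A])
      also have "\<dots> = inner_mu M (kop Q (indicator A)) (kop Q (\<lambda>_. 1))"
        by (rule icong_sp) (simp add: kop_one[OF Qk])
      also have "\<dots> = inner_mu M (indicator A) (\<lambda>_. 1)" by (rule iso[OF ind_L2[OF M A] one])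
      finally show ?thesis using ind1[OF A] by simp
    qed
    have invPm: "(\<integral> x. measure (P x) A \<partial>M) = measure M A" if A: "A \<in> sets M" for A
    proof -
      have "(\<integral> x. measure (P x) A \<partial>M) = inner_mu M (kop P (indicator A)) (\<lambda>_. 1)" by (rule indI[OF Pk A])
      also have "\<dots> = inner_mu M (indicator A) (kop Q (kop P (kop Q (\<lambda>_. 1))))" by (rule mQ'[OF ind_L2[OF M A] one])
      also have "\<dots> = inner_mu M (indicator A) (\<lambda>_. 1)"
      proof (rule icong_sp)
        fix x assume x: "x \<in> space M"
        have "kop Q (kop P (kop Q (\<lambda>_. 1))) x = kop Q (\<lambda>_. 1) x"
        proof (rule kop_cong[OF Qk x])
          fix y assume y: "y \<in> space M"
          have "kop P (kop Q (\<lambda>_. 1)) y = kop P (\<lambda>_. 1) y"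
            by (rule kop_cong[OF Pk y]) (simp add: kop_one[OF Qk])
          then show "kop P (kop Q (\<lambda>_. 1)) y = 1" using kop_one[OF Pk y] by simp
        qed
        then show "kop Q (kop P (kop Q (\<lambda>_. 1))) x = 1" using kop_one[OF Qk x] by simp
      qed
      finally show ?thesis using ind1[OF A] by simp
    qed
    note invQ = invariant_nn[OF M Qk invQm] and invP = invariant_nn[OF M Pk invPm]
    define K2 where "K2 = (\<lambda>x. Q x \<bind> P)"
    have K2k: "K2 \<in> M \<rightarrow>\<^sub>M prob_algebra M" unfolding K2_def by (rule measurable_bind_prob_space[OF Qk Pk])
    have K2ae: "AE x in M. kop K2 f x = kop Q (kop P f) x" if f: "f \<in> L2 M" for f
    proof -
      have fi: "integrable M f" using M f unfolding L2_def
        by (auto simp: prob_space_def intro: finite_measure.square_integrable_imp_integrable)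
      show ?thesis unfolding K2_def by (rule key[OF M Qk Pk invQ invP L2m[OF f] fi])
    qed
    have K2m: "kop K2 f \<in> borel_measurable M" if f: "f \<in> L2 M" for f
      unfolding kop_def
      by (rule measurable_compose[OF measurable_prob_algebraD[OF K2k] integral_measurable_subprob_algebra[OF L2m[OF f]]])
    have K2L2: "kop K2 f \<in> L2 M" if f: "f \<in> L2 M" for f
    proof -
      have q: "kop Q (kop P f) \<in> L2 M" using f QL2 PL2 by auto
      have [measurable]: "kop Q (kop P f) \<in> borel_measurable M" "kop K2 f \<in> borel_measurable M"
        using L2m[OF q] K2m[OF f] by auto
      have "integrable M (\<lambda>x. (kop K2 f x)^2) = integrable M (\<lambda>x. (kop Q (kop P f) x)^2)"
        by (rule integrable_cong_AE) (simp, simp, use K2ae[OF f] in eventually_elim, simp)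
      then show ?thesis using q K2m[OF f] unfolding L2_def by auto
    qed
    have K2op: "markov_op_L2 M K2"
      unfolding markov_op_L2_def markov_kernel_def
    proof (intro conjI ballI impI K2k)
      fix f assume "f \<in> L2 M" then show "kop K2 f \<in> L2 M" by (rule K2L2)
    next
      fix f g assume f: "f \<in> L2 M" and g: "g \<in> L2 M" and fg: "AE x in M. f x = g x"
      have "AE x in M. kop Q (kop P f) x = kop Q (kop P g) x"
        by (rule QAE) (use f g fg PL2 PAE in auto)
      then show "AE x in M. kop K2 f x = kop K2 g x" using K2ae[OF f] K2ae[OF g]
        by eventually_elim simp
    qed
    have K2sa: "mu_self_adjoint M (kop K2)"
      unfolding mu_self_adjoint_def
    proof (intro ballI)
      fix f g assume f: "f \<in> L2 M" and g: "g \<in> L2 M"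
      have "inner_mu M (kop K2 f) g = inner_mu M g (kop K2 f)" by (rule icomm)
      also have "\<dots> = inner_mu M g (kop Q (kop P f))" by (rule icong) (use f g K2L2 QL2 PL2 K2ae in auto)
      also have "\<dots> = inner_mu M (kop Q (kop P f)) g" by (rule icomm)
      also have "\<dots> = inner_mu M f (kop Q (kop P g))" by (rule p1A[OF f g])
      also have "\<dots> = inner_mu M f (kop K2 g)"
      proof (rule icong)
        show "AE x in M. kop Q (kop P g) x = kop K2 g x" using K2ae[OF g] by eventually_elim simp
      qed (use f g K2L2 QL2 PL2 in auto)
      finally show "inner_mu M (kop K2 f) g = inner_mu M f (kop K2 g)" .
    qed
    have Qsa': "mu_self_adjoint M (kop Q)" unfolding mu_self_adjoint_def using Qsa by auto
    have fin: "AE x in M. kop P f x = kop Q (kop K2 f) x" if f: "f \<in> L2 M" for f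
    proof -
      have "AE x in M. kop Q (kop K2 f) x = kop Q (kop Q (kop P f)) x"
        by (rule QAE) (use f K2L2 QL2 PL2 K2ae in auto)
      then show ?thesis using QQ[OF PL2[OF f]] by eventually_elim simp
    qed
    show ?thesis using Qop K2op Qsa' K2sa fin by blast
  qed
  show ?thesis using part1 part2 part3 by blast
qed

end
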